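(* Let $\theta>1$ and $r\in(\theta^{-1},\theta^{-1/2}]$. Let $\mathsf{A}$ be any deterministic online algorithm for one-max search with predictions having robustness $r$ and consistency $\frac1{r\theta}$. Suppose there is $u\in\mathbb{R}$ such that for all $n\ge1$, all $p\in[1,\theta]^n$ with maximum $p^*$ and all $y\in[1,\theta]$, \[ \frac{\mathsf{A}(p,y)}{p^*}\ge\max\Big(r,\ \frac{1}{r\theta}\,\mathcal{E}(p^*,y)^{u}\Big). \] Then $u\ge \frac{\ln\theta}{\ln(r\theta)}-2$.
   Context: One-max search: fix $\theta>1$. An instance is a sequence of prices $p=(p_1,\dots,p_n)\in[1,\theta]^n$, revealed one at a time; the algorithm receives at the start a prediction $y\in[1,\theta]$ of $p^*:=\max_ip_i$. At each step it irrevocably accepts the current price (payoff = that price) or rejects it; if nothing is accepted by step $n$ the payoff is $1$. $\mathsf{A}(p,y)$ is the payoff. Consistency: $\inf_p \mathsf{A}(p,p^* )/p^*$; robustness: $\inf_{p,y}\mathsf{A}(p,y)/p^*$. The multiplicative error is $\mathcal{E}(p^*,y)=\min\{p^*/y,\,y/p^*\}$. *)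

theory Defs
  imports Complex_Main
begin

text \<open>A deterministic online algorithm for one-max search (for a fixed \<theta>):
  on prediction y and the prefix of prices revealed so far (the last element
  being the current price), it decides whether to accept the current price.
  It does not know the horizon n in advance.\<close>
type_synonym alg = "real \<Rightarrow> real list \<Rightarrow> bool"

fun run :: "alg \<Rightarrow> real \<Rightarrow> real list \<Rightarrow> real list \<Rightarrow> real" where
  "run A y past [] = 1"
| "run A y past (x # xs) =
     (if A y (past @ [x]) then x else run A y (past @ [x]) xs)"

definition payoff :: "alg \<Rightarrow> real list \<Rightarrow> real \<Rightarrow> real" where
  "payoff A p y = run A y [] p"

definition instances :: "real \<Rightarrow> real list set" where
  "instances \<theta> = {p. p \<noteq> [] \<and> (\<forall>x\<in>set p. 1 \<le> x \<and> x \<le> \<theta>)}"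

definition pmax :: "real list \<Rightarrow> real" where
  "pmax p = Max (set p)"

definition consistency :: "real \<Rightarrow> alg \<Rightarrow> real" where
  "consistency \<theta> A = (INF p \<in> instances \<theta>. payoff A p (pmax p) / pmax p)"

definition robustness :: "real \<Rightarrow> alg \<Rightarrow> real" where
  "robustness \<theta> A =
     (INF py \<in> instances \<theta> \<times> {1..\<theta>}. payoff A (fst py) (snd py) / pmax (fst py))"

definition mult_err :: "real \<Rightarrow> real \<Rightarrow> real" where
  "mult_err ps y = min (ps / y) (y / ps)"

end

theory Submission
  imports Defs
begin

theorem theorem3:
  fixes \<theta> r u :: real and A :: alg
  assumes "\<theta> > 1"
    and "1 / \<theta> < r" and "r \<le> 1 / sqrt \<theta>"
    and "robustness \<theta> A \<ge> r"
    and "consistency \<theta> A \<ge> 1 / (r * \<theta>)"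
    and "\<forall>p \<in> instances \<theta>. \<forall>y \<in> {1..\<theta>}.
           payoff A p y / pmax p \<ge>
             max r ((1 / (r * \<theta>)) * mult_err (pmax p) y powr u)"
  shows "u \<ge> ln \<theta> / ln (r * \<theta>) - 2"
proof (rule ccontr)
  assume neg: "\<not> ?thesis"
  have th: "\<theta> > 1" by fact
  have rpos: "r > 0" using assms(2) th by (smt (verit) divide_pos_pos)
  have rth: "r * \<theta> > 1" using assms(2) th rpos by (simp add: field_simps)
  have "sqrt \<theta> > 1" using th by simp
  hence "1 / sqrt \<theta> < 1" by simp
  hence r1: "r < 1" using assms(3) by linarith
  have ir: "1 / r > 1" using r1 rpos by simp
  have irt: "1 / r < \<theta>" using rth rpos by (simp add: field_simps)
  define a where "a = ln (r * \<theta>)"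
  have apos: "a > 0" using rth a_def by simp
  have lnr: "ln r = a - ln \<theta>" using rpos th a_def by (simp add: ln_mult)
  have ua: "u * a < ln \<theta> - 2 * a"
  proof -
    have "u < ln \<theta> / a - 2" using neg a_def by simp
    hence "u * a < (ln \<theta> / a - 2) * a" using apos by (simp add: mult_strict_right_mono)
    also have "\<dots> = ln \<theta> - 2 * a" using apos by (simp add: field_simps)
    finally show ?thesis .
  qed
  define f where "f x = x * (x / \<theta>) powr u" for x :: real
  have f1: "f (1 / r) > r * \<theta>"
  proof -
    have "(1/r) / \<theta> = 1 / (r * \<theta>)" by simp
    hence "ln (f (1/r)) = - ln r - u * a"
      unfolding f_def a_def using rpos th rth
      by (simp add: ln_mult ln_powr ln_div algebra_simps)
    also have "\<dots> > a" using lnr ua by simp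
    finally have "ln (f (1/r)) > ln (r * \<theta>)" using a_def by simp
    moreover have "f (1/r) > 0" unfolding f_def using rpos th by simp
    ultimately show ?thesis using rth by (smt (verit) ln_le_cancel_iff)
  qed
  have "isCont f (1 / r)" unfolding f_def using rpos th
    by (intro continuous_intros) auto
  hence "(f \<longlongrightarrow> f (1/r)) (at (1/r))" by (simp add: isCont_def)
  hence "eventually (\<lambda>x. f x > r * \<theta>) (at (1/r))"
    using f1 by (rule order_tendstoD(1))
  then obtain d where d: "d > 0"
    and dd: "\<And>x. x \<noteq> 1/r \<Longrightarrow> dist x (1/r) < d \<Longrightarrow> f x > r * \<theta>"
    unfolding eventually_at by auto
  define x where "x = max (1/r - d/2) 1"
  have x1: "x \<ge> 1" and xl: "x < 1/r" using ir d by (auto simp: x_def)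
  have xt: "x \<le> \<theta>" using xl irt by simp
  have "dist x (1/r) < d" using d ir by (auto simp: x_def dist_real_def)
  hence fx: "f x > r * \<theta>" using dd xl by simp
  have me: "mult_err x \<theta> = x / \<theta>"
    unfolding mult_err_def using x1 xt th
    by (simp add: min_def field_simps) (smt (verit) mult_mono)
  show False
  proof (cases "A \<theta> [x]")
    case True
    have "[x, \<theta>] \<in> instances \<theta>" using x1 xt th by (simp add: instances_def)
    hence "payoff A [x, \<theta>] \<theta> / pmax [x, \<theta>] \<ge> max r ((1 / (r * \<theta>)) * mult_err (pmax [x, \<theta>]) \<theta> powr u)"
      using assms(6) th by auto
    moreover have "pmax [x, \<theta>] = \<theta>" using xt by (simp add: pmax_def max_def)
    moreover have "payoff A [x, \<theta>] \<theta> = x" using True by (simp add: payoff_def)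
    moreover have "mult_err \<theta> \<theta> = 1" using th by (simp add: mult_err_def)
    ultimately have "x / \<theta> \<ge> 1 / (r * \<theta>)" by simp
    hence "x \<ge> 1 / r" using th rpos by (simp add: field_simps)
    thus False using xl by simp
  next
    case False
    have "[x] \<in> instances \<theta>" using x1 xt by (simp add: instances_def)
    hence "payoff A [x] \<theta> / pmax [x] \<ge> max r ((1 / (r * \<theta>)) * mult_err (pmax [x]) \<theta> powr u)"
      using assms(6) th by auto
    moreover have "pmax [x] = x" by (simp add: pmax_def)
    moreover have "payoff A [x] \<theta> = 1" using False by (simp add: payoff_def)
    ultimately have "1 / x \<ge> (1 / (r * \<theta>)) * (x / \<theta>) powr u" using me by simp
    hence "r * \<theta> \<ge> x * (x / \<theta>) powr u" using x1 rth by (simp add: field_simps)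
    thus False using fx f_def by simp
  qed
qed

end
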